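(* Let $A$ be a hyperoperator on $\mathbb{R}^n$ on the complex Banach space $X$ and let $f\in\mathcal{E}(\mathbb{R}^n)$ be real-valued. Assume that $b=f(a)$ is bounded, i.e. extends to a bounded operator $\bar b$ on $X$. Then $f(\sigma(A))\subset\sigma(\bar b)$, where $\sigma(\bar b)$ is the spectrum of the bounded operator $\bar b$.
   Context: $X$ is a complex Banach space, $L(X)$ the bounded operators. $\mathcal{D}(\mathbb{R}^n)=C_c^\infty(\mathbb{R}^n)$, $\mathcal{E}(\mathbb{R}^n)=C^\infty(\mathbb{R}^n)$. A hyperoperator on $\mathbb{R}^n$ is a linear map $A:\mathcal{D}(\mathbb{R}^n)\to L(X)$, continuous ($A(\phi_j)\to0$ in operator norm when $\phi_j\to0$ in $\mathcal{D}(\mathbb{R}^n)$), multiplicative, with (i) $D_A:=\bigcup_\phi\operatorname{Im}A(\phi)$ dense and (ii) $\bigcap_\phi\operatorname{Ker}A(\phi)=\{0\}$. For smooth real-valued $f$ and $x\in D_A$ written $x=A(\phi)y$, $f(a)x:=A(f\phi)y$ (well defined). $\sigma(A)$ is the support of $A$ as an $L(X)$-valued distribution. *)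

theory Defs
  imports "HOL-Analysis.Analysis"
begin

text \<open>Complex Banach spaces: a real Banach space with a compatible complex
scalar multiplication (HOL-Analysis has no complex vector space class).\<close>
class complex_banach = banach +
  fixes cscale :: "complex \<Rightarrow> 'a \<Rightarrow> 'a"
  assumes cscale_of_real: "cscale (complex_of_real r) x = r *\<^sub>R x"
    and cscale_add_right: "cscale a (x + y) = cscale a x + cscale a y"
    and cscale_add_left: "cscale (a + b) x = cscale a x + cscale b x"
    and cscale_cscale: "cscale a (cscale b x) = cscale (a * b) x"
    and norm_cscale: "norm (cscale a x) = cmod a * norm x"

definition bop :: "('x::complex_banach \<Rightarrow> 'x) \<Rightarrow> bool" where
  "bop T \<longleftrightarrow> bounded_linear T \<and> (\<forall>c x. T (cscale c x) = cscale c (T x))"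

fun pderivs :: "(real^'n) list \<Rightarrow> (real^'n \<Rightarrow> 'b::real_normed_vector) \<Rightarrow> real^'n \<Rightarrow> 'b" where
  "pderivs [] f = f"
| "pderivs (v # vs) f = (\<lambda>x. frechet_derivative (pderivs vs f) (at x) v)"

definition smooth :: "(real^'n \<Rightarrow> 'b::real_normed_vector) \<Rightarrow> bool" where
  "smooth f \<longleftrightarrow> (\<forall>vs \<in> lists Basis. \<forall>x. pderivs vs f differentiable (at x))"

definition tsupp :: "(real^'n \<Rightarrow> 'b::zero) \<Rightarrow> (real^'n) set" where
  "tsupp f = closure {x. f x \<noteq> 0}"

definition test :: "(real^'n \<Rightarrow> complex) \<Rightarrow> bool" where
  "test \<phi> \<longleftrightarrow> smooth \<phi> \<and> compact (tsupp \<phi>)"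

definition conv0_D :: "(nat \<Rightarrow> real^'n \<Rightarrow> complex) \<Rightarrow> bool" where
  "conv0_D \<phi>s \<longleftrightarrow> (\<forall>j. test (\<phi>s j)) \<and> (\<exists>K. compact K \<and> (\<forall>j. tsupp (\<phi>s j) \<subseteq> K)) \<and>
     (\<forall>vs \<in> lists Basis. uniform_limit UNIV (\<lambda>j. pderivs vs (\<phi>s j)) (\<lambda>x. 0) sequentially)"

definition hyperop :: "((real^'n \<Rightarrow> complex) \<Rightarrow> 'x::complex_banach \<Rightarrow> 'x) \<Rightarrow> bool" where
  "hyperop A \<longleftrightarrow>
     (\<forall>\<phi>. test \<phi> \<longrightarrow> bop (A \<phi>)) \<and>
     (\<forall>\<phi> \<psi>. test \<phi> \<longrightarrow> test \<psi> \<longrightarrow> A (\<lambda>x. \<phi> x + \<psi> x) = (\<lambda>y. A \<phi> y + A \<psi> y)) \<and>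
     (\<forall>c \<phi>. test \<phi> \<longrightarrow> A (\<lambda>x. c * \<phi> x) = (\<lambda>y. cscale c (A \<phi> y))) \<and>
     (\<forall>\<phi>s. conv0_D \<phi>s \<longrightarrow> (\<lambda>j. onorm (A (\<phi>s j))) \<longlonglongrightarrow> 0) \<and>
     (\<forall>\<phi> \<psi>. test \<phi> \<longrightarrow> test \<psi> \<longrightarrow> A (\<lambda>x. \<phi> x * \<psi> x) = A \<phi> \<circ> A \<psi>) \<and>
     closure (\<Union>\<phi> \<in> Collect test. range (A \<phi>)) = UNIV \<and>
     (\<forall>y. (\<forall>\<phi>. test \<phi> \<longrightarrow> A \<phi> y = 0) \<longrightarrow> y = 0)"

definition DA :: "((real^'n \<Rightarrow> complex) \<Rightarrow> 'x::complex_banach \<Rightarrow> 'x) \<Rightarrow> 'x set" where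
  "DA A = (\<Union>\<phi> \<in> Collect test. range (A \<phi>))"

definition fcalc :: "(real^'n \<Rightarrow> real) \<Rightarrow> ((real^'n \<Rightarrow> complex) \<Rightarrow> 'x::complex_banach \<Rightarrow> 'x) \<Rightarrow> 'x \<Rightarrow> 'x" where
  "fcalc f A x = (SOME z. \<exists>\<phi> y. test \<phi> \<and> x = A \<phi> y \<and> z = A (\<lambda>t. complex_of_real (f t) * \<phi> t) y)"

definition hsupp :: "((real^'n \<Rightarrow> complex) \<Rightarrow> 'x::complex_banach \<Rightarrow> 'x) \<Rightarrow> (real^'n) set" where
  "hsupp A = {t. \<forall>U. open U \<and> t \<in> U \<longrightarrow> (\<exists>\<phi>. test \<phi> \<and> tsupp \<phi> \<subseteq> U \<and> A \<phi> \<noteq> (\<lambda>y. 0))}"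

definition opspectrum :: "('x::complex_banach \<Rightarrow> 'x) \<Rightarrow> complex set" where
  "opspectrum T = {l. \<not> (\<exists>S. bop S \<and> (\<forall>x. S (T x - cscale l x) = x) \<and>
                                  (\<forall>x. T (S x) - cscale l (S x) = x))}"

end

theory Submission
  imports Defs
begin

lemma poly_geo:
  assumes "0 \<le> r" "r < 1"
  shows "(\<lambda>k. real (k+1)^m * r^k) \<longlonglongrightarrow> 0"
proof (cases "m = 0")
  case True
  then show ?thesis using assms by (simp add: LIMSEQ_power_zero)
next
  case False
  define s where "s = root m r"
  have sm: "s ^ m = r" using False assms by (simp add: s_def real_root_pow_pos2)
  have s0: "0 \<le> s" using assms by (simp add: s_def real_root_ge_zero)
  have s1: "s < 1" using False assms by (simp add: s_def)
  have eq: "real (k+1)^m * r^k = (real k * s^k + s^k)^m" for k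
  proof -
    have "real k * s^k + s^k = (real k + 1) * s^k" by (simp add: algebra_simps)
    then have "(real k * s^k + s^k)^m = (real k + 1)^m * (s^m)^k"
      by (simp add: power_mult_distrib power_mult[symmetric] mult.commute)
    then show ?thesis by (simp add: sm add.commute)
  qed
  have "(\<lambda>k. real k * s^k + s^k) \<longlonglongrightarrow> 0 + 0"
    apply (intro tendsto_add)
    using powser_times_n_limit_0[of s] s0 s1 apply simp
    using LIMSEQ_power_zero[of s] s0 s1 by simp
  then have lim: "(\<lambda>k. (real k * s^k + s^k)^m) \<longlonglongrightarrow> 0 ^ m"
    by (intro tendsto_power) simp
  have z: "(0::real) ^ m = 0" using False by simp
  have e: "(\<lambda>k. real (k+1)^m * r^k) = (\<lambda>k. (real k * s^k + s^k)^m)"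
    by (rule ext) (rule eq)
  show ?thesis unfolding e using lim unfolding z .
qed


definition Dv :: "real^'n \<Rightarrow> (real^'n \<Rightarrow> 'b::real_normed_vector) \<Rightarrow> real^'n \<Rightarrow> 'b" where
  "Dv v F = (\<lambda>x. frechet_derivative F (at x) v)"

definition su :: "nat \<Rightarrow> (real^'n \<Rightarrow> 'b::real_normed_vector) \<Rightarrow> bool" where
  "su m F \<longleftrightarrow> (\<forall>vs\<in>lists Basis. length vs \<le> m \<longrightarrow> (\<forall>x. pderivs vs F differentiable (at x)))"

lemma pderivs_snoc: "pderivs (vs @ [v]) F = pderivs vs (Dv v F)"
  by (induction vs) (simp_all add: Dv_def)

lemma su_0: "su 0 F \<longleftrightarrow> (\<forall>x. F differentiable (at x))"
  by (auto simp: su_def)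

lemma su_Suc: "su (Suc m) F \<longleftrightarrow> (\<forall>x. F differentiable (at x)) \<and> (\<forall>v\<in>Basis. su m (Dv v F))"
proof
  assume a: "su (Suc m) F"
  show "(\<forall>x. F differentiable (at x)) \<and> (\<forall>v\<in>Basis. su m (Dv v F))"
  proof
    show "\<forall>x. F differentiable (at x)" using a unfolding su_def
      by (metis le0 list.size(3) lists.Nil pderivs.simps(1))
    show "\<forall>v\<in>Basis. su m (Dv v F)"
    proof (intro ballI)
      fix v :: "real^'a" assume v: "v \<in> Basis"
      show "su m (Dv v F)" unfolding su_def
      proof (intro ballI impI allI)
        fix vs :: "(real^'a) list" and x assume "vs \<in> lists Basis" "length vs \<le> m"
        then have "vs @ [v] \<in> lists Basis" "length (vs @ [v]) \<le> Suc m" using v by auto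
        then show "pderivs vs (Dv v F) differentiable (at x)"
          using a unfolding su_def by (metis pderivs_snoc)
      qed
    qed
  qed
next
  assume a: "(\<forall>x. F differentiable (at x)) \<and> (\<forall>v\<in>Basis. su m (Dv v F))"
  show "su (Suc m) F" unfolding su_def
  proof (intro ballI impI allI)
    fix vs :: "(real^'a) list" and x assume vs: "vs \<in> lists Basis" "length vs \<le> Suc m"
    show "pderivs vs F differentiable (at x)"
    proof (cases vs rule: rev_exhaust)
      case Nil
      then show ?thesis using a by simp
    next
      case (snoc ws v)
      then have "ws \<in> lists Basis" "v \<in> Basis" "length ws \<le> m" using vs by auto
      then show ?thesis using a unfolding snoc pderivs_snoc su_def by blast
    qed
  qed
qed

lemma smooth_su: "smooth F \<longleftrightarrow> (\<forall>m. su m F)"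
  unfolding smooth_def su_def by auto

lemma su_mono: "su m' F \<Longrightarrow> m \<le> m' \<Longrightarrow> su m F"
  unfolding su_def by auto

lemma su_diff: "su m F \<Longrightarrow> F differentiable (at x)"
  using su_mono[of m F 0] su_0 by auto

lemma Dv_add:
  assumes "\<And>x. F differentiable (at x)" "\<And>x. G differentiable (at x)"
  shows "Dv v (\<lambda>x. F x + G x) = (\<lambda>x. Dv v F x + Dv v G x)"
proof
  fix x
  have D: "((\<lambda>x. F x + G x) has_derivative (\<lambda>h. frechet_derivative F (at x) h + frechet_derivative G (at x) h)) (at x)"
    by (intro has_derivative_add; rule iffD1[OF frechet_derivative_works]; rule assms)
  then show "Dv v (\<lambda>x. F x + G x) x = Dv v F x + Dv v G x"
    unfolding Dv_def by (simp add: frechet_derivative_at[OF D, symmetric])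
qed

lemma Dv_mult:
  fixes F G :: "real^'n \<Rightarrow> complex"
  assumes "\<And>x. F differentiable (at x)" "\<And>x. G differentiable (at x)"
  shows "Dv v (\<lambda>x. F x * G x) = (\<lambda>x. F x * Dv v G x + Dv v F x * G x)"
proof
  fix x
  have D: "((\<lambda>x. F x * G x) has_derivative (\<lambda>h. F x * frechet_derivative G (at x) h + frechet_derivative F (at x) h * G x)) (at x)"
    by (intro has_derivative_mult; rule iffD1[OF frechet_derivative_works]; rule assms)
  then show "Dv v (\<lambda>x. F x * G x) x = F x * Dv v G x + Dv v F x * G x"
    unfolding Dv_def by (simp add: frechet_derivative_at[OF D, symmetric])
qed

lemma Dv_const: "Dv v (\<lambda>x::real^'n. (c::'b::real_normed_vector)) = (\<lambda>x. 0)"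
proof
  fix x :: "real^'n"
  have D: "((\<lambda>x. c) has_derivative (\<lambda>h. 0)) (at x)" by simp
  then show "Dv v (\<lambda>x. c) x = 0" unfolding Dv_def by (simp add: frechet_derivative_at[OF D, symmetric])
qed

lemma Dv_ofreal:
  fixes f :: "real^'n \<Rightarrow> real"
  assumes "\<And>x. f differentiable (at x)"
  shows "Dv v (\<lambda>x. complex_of_real (f x)) = (\<lambda>x. complex_of_real (Dv v f x))"
proof
  fix x
  have D: "((\<lambda>x. complex_of_real (f x)) has_derivative (\<lambda>h. complex_of_real (frechet_derivative f (at x) h))) (at x)"
    by (intro has_derivative_of_real; rule iffD1[OF frechet_derivative_works]; rule assms)
  then show "Dv v (\<lambda>x. complex_of_real (f x)) x = complex_of_real (Dv v f x)"
    unfolding Dv_def by (simp add: frechet_derivative_at[OF D, symmetric])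
qed

lemma Dv_power:
  fixes g :: "real^'n \<Rightarrow> complex"
  assumes "\<And>x. g differentiable (at x)"
  shows "Dv v (\<lambda>x. g x ^ k) = (\<lambda>x. of_nat k * Dv v g x * g x ^ (k - 1))"
proof
  fix x
  have D: "((\<lambda>x. g x ^ k) has_derivative (\<lambda>h. of_nat k * frechet_derivative g (at x) h * g x ^ (k - 1))) (at x)"
    by (intro has_derivative_power; rule iffD1[OF frechet_derivative_works]; rule assms)
  then show "Dv v (\<lambda>x. g x ^ k) x = of_nat k * Dv v g x * g x ^ (k - 1)"
    unfolding Dv_def by (simp add: frechet_derivative_at[OF D, symmetric])
qed

lemma su_add: "su m F \<Longrightarrow> su m G \<Longrightarrow> su m (\<lambda>x. F x + G x)"
proof (induction m arbitrary: F G)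
  case 0 then show ?case by (simp add: su_0)
next
  case (Suc m)
  have dF: "\<And>x. F differentiable (at x)" and dG: "\<And>x. G differentiable (at x)"
    using Suc.prems su_diff by blast+
  show ?case unfolding su_Suc
  proof (intro conjI allI ballI)
    show "(\<lambda>x. F x + G x) differentiable (at x)" for x using dF dG by simp
    fix v :: "real^'a" assume v: "v \<in> Basis"
    have a: "su m (Dv v F)" "su m (Dv v G)" using Suc.prems v by (auto simp: su_Suc)
    show "su m (Dv v (\<lambda>x. F x + G x))"
      unfolding Dv_add[OF dF dG] by (rule Suc.IH[OF a])
  qed
qed

lemma su_const: "su m (\<lambda>x::real^'n. (c::'b::real_normed_vector))"
proof (induction m arbitrary: c)
  case 0 then show ?case by (simp add: su_0)
next
  case (Suc m) then show ?case unfolding su_Suc Dv_const by simp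
qed

lemma su_mult:
  fixes F G :: "real^'n \<Rightarrow> complex"
  shows "su m F \<Longrightarrow> su m G \<Longrightarrow> su m (\<lambda>x. F x * G x)"
proof (induction m arbitrary: F G)
  case 0 then show ?case by (simp add: su_0)
next
  case (Suc m)
  have dF: "\<And>x. F differentiable (at x)" and dG: "\<And>x. G differentiable (at x)"
    using Suc.prems su_diff by blast+
  have mF: "su m F" and mG: "su m G" using Suc.prems su_mono by (metis le_SucI order_refl)+
  show ?case unfolding su_Suc
  proof (intro conjI allI ballI)
    show "(\<lambda>x. F x * G x) differentiable (at x)" for x using dF dG by simp
    fix v :: "real^'n" assume v: "v \<in> Basis"
    have a: "su m (Dv v F)" "su m (Dv v G)" using Suc.prems v by (auto simp: su_Suc)
    show "su m (Dv v (\<lambda>x. F x * G x))"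
      unfolding Dv_mult[OF dF dG]
      by (intro su_add Suc.IH mF mG a)
  qed
qed

lemma diff_ofreal:
  fixes f :: "real^'n \<Rightarrow> real"
  shows "f differentiable (at x) \<Longrightarrow> (\<lambda>x. complex_of_real (f x)) differentiable (at x)"
  unfolding differentiable_def using has_derivative_of_real by blast

lemma su_ofreal:
  fixes f :: "real^'n \<Rightarrow> real"
  shows "su m f \<Longrightarrow> su m (\<lambda>x. complex_of_real (f x))"
proof (induction m arbitrary: f)
  case 0 then show ?case by (simp add: su_0 diff_ofreal)
next
  case (Suc m)
  have df: "\<And>x. f differentiable (at x)" using Suc.prems su_diff by blast
  show ?case unfolding su_Suc
  proof (intro conjI allI ballI)
    show "(\<lambda>x. complex_of_real (f x)) differentiable (at x)" for x using df diff_ofreal by blast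
    fix v :: "real^'n" assume v: "v \<in> Basis"
    have a: "su m (Dv v f)" using Suc.prems v by (auto simp: su_Suc)
    show "su m (Dv v (\<lambda>x. complex_of_real (f x)))"
      unfolding Dv_ofreal[OF df] by (rule Suc.IH[OF a])
  qed
qed

lemma smooth_add: "smooth F \<Longrightarrow> smooth G \<Longrightarrow> smooth (\<lambda>x. F x + G x)"
  by (simp add: smooth_su su_add)
lemma smooth_const: "smooth (\<lambda>x. c)"
  by (simp add: smooth_su su_const)
lemma smooth_mult:
  fixes F G :: "real^'n \<Rightarrow> complex"
  shows "smooth F \<Longrightarrow> smooth G \<Longrightarrow> smooth (\<lambda>x. F x * G x)"
  by (simp add: smooth_su su_mult)
lemma smooth_ofreal:
  fixes f :: "real^'n \<Rightarrow> real"
  shows "smooth f \<Longrightarrow> smooth (\<lambda>x. complex_of_real (f x))"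
  by (simp add: smooth_su su_ofreal)
lemma smooth_diff: "smooth F \<Longrightarrow> F differentiable (at x)"
  by (simp add: smooth_su su_diff)
lemma smooth_Dv: "smooth F \<Longrightarrow> v \<in> Basis \<Longrightarrow> smooth (Dv v F)"
  by (simp add: smooth_su) (metis su_Suc)
lemma smooth_cmult:
  fixes F :: "real^'n \<Rightarrow> complex"
  shows "smooth F \<Longrightarrow> smooth (\<lambda>x. c * F x)"
  using smooth_mult[OF smooth_const] by blast
lemma smooth_power:
  fixes F :: "real^'n \<Rightarrow> complex"
  shows "smooth F \<Longrightarrow> smooth (\<lambda>x. F x ^ k)"
proof (induction k)
  case 0 then show ?case by (simp add: smooth_const)
next
  case (Suc k)
  have "smooth (\<lambda>x. F x * F x ^ k)" using smooth_mult[of F "\<lambda>x. F x ^ k"] Suc by blast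
  then show ?case by (simp only: power_Suc)
qed

lemma pderivs_add:
  assumes "smooth F" "smooth G" "vs \<in> lists Basis"
  shows "pderivs vs (\<lambda>x. F x + G x) = (\<lambda>x. pderivs vs F x + pderivs vs G x)"
  using assms(3)
proof (induction vs)
  case Nil then show ?case by simp
next
  case (Cons v vs)
  then have "vs \<in> lists Basis" by simp
  then have d: "\<And>x. pderivs vs F differentiable (at x)" "\<And>x. pderivs vs G differentiable (at x)"
    using assms unfolding smooth_def by auto
  have "pderivs (v # vs) (\<lambda>x. F x + G x) = Dv v (pderivs vs (\<lambda>x. F x + G x))"
    by (simp add: Dv_def)
  also have "\<dots> = Dv v (\<lambda>x. pderivs vs F x + pderivs vs G x)" using Cons by simp
  also have "\<dots> = (\<lambda>x. Dv v (pderivs vs F) x + Dv v (pderivs vs G) x)" by (rule Dv_add[OF d])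
  finally show ?case by (simp add: Dv_def)
qed

lemma pderivs_cmult:
  fixes F :: "real^'n \<Rightarrow> complex"
  assumes "smooth F" "vs \<in> lists Basis"
  shows "pderivs vs (\<lambda>x. c * F x) = (\<lambda>x. c * pderivs vs F x)"
  using assms(2)
proof (induction vs)
  case Nil then show ?case by simp
next
  case (Cons v vs)
  then have "vs \<in> lists Basis" by simp
  then have d: "\<And>x. pderivs vs F differentiable (at x)"
    using assms unfolding smooth_def by auto
  have "pderivs (v # vs) (\<lambda>x. c * F x) = Dv v (pderivs vs (\<lambda>x. c * F x))"
    by (simp add: Dv_def)
  also have "\<dots> = Dv v (\<lambda>x. c * pderivs vs F x)" using Cons by simp
  also have "\<dots> = (\<lambda>x. c * Dv v (pderivs vs F) x + Dv v (\<lambda>x. c) x * pderivs vs F x)"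
    by (rule Dv_mult) (use d in auto)
  finally show ?case by (simp add: Dv_def Dv_const)
qed


lemma tsupp_closed: "closed (tsupp F)"
  unfolding tsupp_def by simp

lemma notin_tsupp:
  assumes "x \<notin> tsupp F" shows "F x = 0"
proof (rule ccontr)
  assume "F x \<noteq> 0"
  then have "x \<in> {x. F x \<noteq> 0}" by simp
  then have "x \<in> tsupp F" unfolding tsupp_def by (rule subsetD[OF closure_subset])
  then show False using assms by simp
qed

lemma tsupp_mult: "tsupp (\<lambda>x. F x * (H x :: complex)) \<subseteq> tsupp H"
  unfolding tsupp_def by (rule closure_mono) auto

lemma tsupp_mult2: "tsupp (\<lambda>x. F x * (H x :: complex)) \<subseteq> tsupp F"
  unfolding tsupp_def by (rule closure_mono) auto

lemma Dv_outside:
  fixes H :: "real^'n \<Rightarrow> 'b::real_normed_vector"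
  assumes "x \<notin> tsupp H"
  shows "Dv v H x = 0"
proof -
  have "((\<lambda>x. 0::'b) has_derivative (\<lambda>h. 0)) (at x)" by simp
  then have D: "(H has_derivative (\<lambda>h. 0)) (at x)"
  proof (rule has_derivative_transform_within_open[where s="- tsupp H"])
    show "open (- tsupp H)" using tsupp_closed by (rule open_Compl)
    show "x \<in> - tsupp H" using assms by simp
    fix y assume "y \<in> - tsupp H"
    then show "0 = H y" using notin_tsupp[of y H] by simp
  qed
  show ?thesis unfolding Dv_def by (simp add: frechet_derivative_at[OF D, symmetric])
qed

lemma tsupp_Dv: "tsupp (Dv v H) \<subseteq> tsupp H"
proof -
  have "{x. Dv v H x \<noteq> 0} \<subseteq> tsupp H"
  proof
    fix x assume "x \<in> {x. Dv v H x \<noteq> 0}"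
    then show "x \<in> tsupp H" using Dv_outside[of x H v] by auto
  qed
  then have "closure {x. Dv v H x \<noteq> 0} \<subseteq> closure (tsupp H)" by (rule closure_mono)
  then show ?thesis unfolding tsupp_def[of "Dv v H"] closure_closed[OF tsupp_closed] .
qed

lemma compact_tsupp_sub: "compact K \<Longrightarrow> tsupp F \<subseteq> K \<Longrightarrow> compact (tsupp F)"
  using compact_Int_closed[OF _ tsupp_closed, of K F] by (simp add: inf_absorb2)

lemma test_mult:
  fixes F H :: "real^'n \<Rightarrow> complex"
  shows "smooth F \<Longrightarrow> test H \<Longrightarrow> test (\<lambda>x. F x * H x)"
proof -
  assume a: "smooth F" "test H"
  have "smooth (\<lambda>x. F x * H x)" using smooth_mult[of F H] a unfolding test_def by simp
  moreover have "compact (tsupp (\<lambda>x. F x * H x))"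
    using compact_tsupp_sub[OF _ tsupp_mult[of F H]] a unfolding test_def by simp
  ultimately show ?thesis unfolding test_def by simp
qed

lemma bounded_H:
  fixes H :: "real^'n \<Rightarrow> complex"
  assumes "smooth H" "compact (tsupp H)"
  obtains B where "B \<ge> 0" "\<And>x. cmod (H x) \<le> B"
proof -
  have "continuous (at x) H" for x
    using smooth_diff[OF assms(1)] by (rule differentiable_imp_continuous_within)
  then have "continuous_on UNIV H" by (simp add: continuous_at_imp_continuous_on)
  then have "continuous_on (tsupp H) H" by (rule continuous_on_subset) simp
  then have "compact (H ` tsupp H)" using assms(2) by (rule compact_continuous_image)
  then have "bounded (H ` tsupp H)" by (rule compact_imp_bounded)
  then obtain B where B: "B > 0" "\<And>y. y \<in> H ` tsupp H \<Longrightarrow> norm y \<le> B"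
    unfolding bounded_pos by auto
  have bnd: "cmod (H x) \<le> B" for x
  proof (cases "x \<in> tsupp H")
    case True then show ?thesis using B by auto
  next
    case False then show ?thesis using B(1) notin_tsupp[OF False] by simp
  qed
  show ?thesis by (rule that[of B]) (use B(1) bnd in auto)
qed

definition goodH :: "(real^'n \<Rightarrow> complex) \<Rightarrow> real \<Rightarrow> (real^'n \<Rightarrow> complex) \<Rightarrow> bool" where
  "goodH g e H \<longleftrightarrow> smooth H \<and> compact (tsupp H) \<and> (\<forall>x\<in>tsupp H. cmod (g x) \<le> e)"

lemma goodH_Dv:
  assumes "goodH g e H" "v \<in> Basis" shows "goodH g e (Dv v H)"
proof -
  have a: "smooth H" "compact (tsupp H)" "\<forall>x\<in>tsupp H. cmod (g x) \<le> e"
    using assms(1) unfolding goodH_def by auto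
  have "smooth (Dv v H)" using smooth_Dv[OF a(1) assms(2)] .
  moreover have "compact (tsupp (Dv v H))" using compact_tsupp_sub[OF a(2) tsupp_Dv] .
  moreover have "\<forall>x\<in>tsupp (Dv v H). cmod (g x) \<le> e" using a(3) tsupp_Dv[of v H] by auto
  ultimately show ?thesis unfolding goodH_def by simp
qed

lemma goodH_mult:
  assumes "goodH g e H" "smooth F" shows "goodH g e (\<lambda>x. F x * H x)"
proof -
  have a: "smooth H" "compact (tsupp H)" "\<forall>x\<in>tsupp H. cmod (g x) \<le> e"
    using assms(1) unfolding goodH_def by auto
  have "smooth (\<lambda>x. F x * H x)" using smooth_mult[OF assms(2) a(1)] .
  moreover have "compact (tsupp (\<lambda>x. F x * H x))" using compact_tsupp_sub[OF a(2) tsupp_mult] .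
  moreover have "\<forall>x\<in>tsupp (\<lambda>x. F x * H x). cmod (g x) \<le> e" using a(3) tsupp_mult[of F H] by auto
  ultimately show ?thesis unfolding goodH_def by simp
qed

lemma est:
  fixes g :: "real^'n \<Rightarrow> complex"
  assumes g: "smooth g" and ep: "e > 0"
  shows "\<forall>H. goodH g e H \<longrightarrow> (\<forall>vs \<in> lists Basis. length vs = m \<longrightarrow>
           (\<exists>C\<ge>0. \<forall>k x. cmod (pderivs vs (\<lambda>x. g x ^ k * H x) x) \<le> C * real (k+1)^m * e^k))"
proof (induction m)
  case 0
  show ?case
  proof (intro allI impI ballI)
    fix H :: "real^'n \<Rightarrow> complex" and vs :: "(real^'n) list"
    assume H: "goodH g e H" and "length vs = 0"
    then have vs: "vs = []" by simp
    obtain B where B: "B \<ge> 0" "\<And>x. cmod (H x) \<le> B" using bounded_H H unfolding goodH_def by metis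
    have "cmod (g x ^ k * H x) \<le> B * real (k+1)^0 * e^k" for k x
    proof (cases "x \<in> tsupp H")
      case True
      then have "cmod (g x) \<le> e" using H unfolding goodH_def by blast
      then have "cmod (g x) ^ k \<le> e ^ k" by (simp add: power_mono)
      then have "cmod (g x) ^ k * cmod (H x) \<le> e^k * B"
        using B ep by (intro mult_mono) auto
      then show ?thesis by (simp add: norm_mult norm_power mult.commute)
    next
      case False
      then show ?thesis using notin_tsupp[OF False] B ep by simp
    qed
    then show "\<exists>C\<ge>0. \<forall>k x. cmod (pderivs vs (\<lambda>x. g x ^ k * H x) x) \<le> C * real (k+1)^0 * e^k"
      using B vs by auto
  qed
next
  case (Suc m)
  show ?case
  proof (intro allI impI ballI)
    fix H :: "real^'n \<Rightarrow> complex" and vs :: "(real^'n) list"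
    assume H: "goodH g e H" and vsB: "vs \<in> lists Basis" and len: "length vs = Suc m"
    obtain ws v where vs: "vs = ws @ [v]" using len by (cases vs rule: rev_exhaust) auto
    have ws: "ws \<in> lists Basis" "length ws = m" and v: "v \<in> Basis" using vsB len vs by auto
    define H1 where "H1 = (\<lambda>x. Dv v g x * H x)"
    define H2 where "H2 = Dv v H"
    have sH: "smooth H" using H goodH_def by blast
    have gH1: "goodH g e H1" unfolding H1_def using goodH_mult[OF H smooth_Dv[OF g v]] .
    have gH2: "goodH g e H2" unfolding H2_def using goodH_Dv[OF H v] .
    have "\<exists>C\<ge>0. \<forall>k x. cmod (pderivs ws (\<lambda>x. g x ^ k * H1 x) x) \<le> C * real (k+1)^m * e^k"
      using Suc.IH gH1 ws by blast
    then obtain C1 where C1: "C1 \<ge> 0" "\<And>k x. cmod (pderivs ws (\<lambda>x. g x ^ k * H1 x) x) \<le> C1 * real (k+1)^m * e^k"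
      by blast
    have "\<exists>C\<ge>0. \<forall>k x. cmod (pderivs ws (\<lambda>x. g x ^ k * H2 x) x) \<le> C * real (k+1)^m * e^k"
      using Suc.IH gH2 ws by blast
    then obtain C2 where C2: "C2 \<ge> 0" "\<And>k x. cmod (pderivs ws (\<lambda>x. g x ^ k * H2 x) x) \<le> C2 * real (k+1)^m * e^k"
      by blast
    have sH1: "smooth H1" and sH2: "smooth H2" using gH1 gH2 goodH_def by blast+
    have sgk: "smooth (\<lambda>x. g x ^ k * F x)" if "smooth F" for k F
      using smooth_mult[OF smooth_power[OF g] that] .
    define C where "C = C2 + C1 / e"
    have C0: "C \<ge> 0" using C1 C2 ep by (simp add: C_def)
    have "cmod (pderivs vs (\<lambda>x. g x ^ k * H x) x) \<le> C * real (k+1)^(Suc m) * e^k" for k x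
    proof (cases k)
      case 0
      have "pderivs vs (\<lambda>x. g x ^ k * H x) = pderivs ws (\<lambda>x. g x ^ 0 * H2 x)"
        unfolding vs pderivs_snoc 0 H2_def by simp
      then have "cmod (pderivs vs (\<lambda>x. g x ^ k * H x) x) \<le> C2 * real (0+1)^m * e^0"
        using C2(2)[of 0 x] by simp
      also have "\<dots> \<le> C * real (k+1)^(Suc m) * e^k" using 0 C1 ep by (simp add: C_def)
      finally show ?thesis .
    next
      case (Suc j)
      have dg: "\<And>x. (\<lambda>x. g x ^ k) differentiable (at x)" using smooth_diff[OF smooth_power[OF g]] by blast
      have dH: "\<And>x. H differentiable (at x)" using smooth_diff[OF sH] by blast
      have dg1: "\<And>x. g differentiable (at x)" using smooth_diff[OF g] by blast
      have "Dv v (\<lambda>x. g x ^ k * H x) = (\<lambda>x. g x ^ k * Dv v H x + Dv v (\<lambda>x. g x ^ k) x * H x)"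
        by (rule Dv_mult[OF dg dH])
      also have "\<dots> = (\<lambda>x. g x ^ k * H2 x + of_nat k * (g x ^ j * H1 x))"
        unfolding Dv_power[OF dg1] H1_def H2_def Suc by (simp add: algebra_simps)
      finally have eqD: "Dv v (\<lambda>x. g x ^ k * H x) = (\<lambda>x. g x ^ k * H2 x + of_nat k * (g x ^ j * H1 x))" .
      have "pderivs vs (\<lambda>x. g x ^ k * H x) = pderivs ws (\<lambda>x. g x ^ k * H2 x + of_nat k * (g x ^ j * H1 x))"
        unfolding vs pderivs_snoc eqD ..
      also have "\<dots> = (\<lambda>x. pderivs ws (\<lambda>x. g x ^ k * H2 x) x + pderivs ws (\<lambda>x. of_nat k * (g x ^ j * H1 x)) x)"
        by (rule pderivs_add[OF sgk[OF sH2] smooth_cmult[OF sgk[OF sH1]] ws(1)])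
      also have "\<dots> = (\<lambda>x. pderivs ws (\<lambda>x. g x ^ k * H2 x) x + of_nat k * pderivs ws (\<lambda>x. g x ^ j * H1 x) x)"
        by (simp only: pderivs_cmult[OF sgk[OF sH1] ws(1)])
      finally have eqP: "pderivs vs (\<lambda>x. g x ^ k * H x) x = pderivs ws (\<lambda>x. g x ^ k * H2 x) x + of_nat k * pderivs ws (\<lambda>x. g x ^ j * H1 x) x"
        by simp
      have "cmod (pderivs vs (\<lambda>x. g x ^ k * H x) x) \<le> cmod (pderivs ws (\<lambda>x. g x ^ k * H2 x) x) + real k * cmod (pderivs ws (\<lambda>x. g x ^ j * H1 x) x)"
        unfolding eqP using norm_triangle_ineq[of "pderivs ws (\<lambda>x. g x ^ k * H2 x) x" "of_nat k * pderivs ws (\<lambda>x. g x ^ j * H1 x) x"] by (simp add: norm_mult)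
      also have "\<dots> \<le> C2 * real (k+1)^m * e^k + real k * (C1 * real (j+1)^m * e^j)"
        by (intro add_mono mult_left_mono C1 C2) auto
      also have "\<dots> \<le> C * real (k+1)^(Suc m) * e^k"
      proof -
        have a: "C2 * real (k+1)^m * e^k \<le> C2 * real (k+1)^(Suc m) * e^k"
          using C2 ep by (intro mult_right_mono mult_left_mono) (auto simp: power_increasing)
        have "real k * (C1 * real (j+1)^m * e^j) = (C1 / e) * (real k * real k ^ m) * e^k"
        proof -
          have "real k = real j + 1" using Suc by simp
          moreover have "e^k = e * e^j" using Suc by simp
          ultimately show ?thesis using ep by (simp add: field_simps)
        qed
        also have "\<dots> \<le> (C1 / e) * real (k+1)^(Suc m) * e^k"
        proof -
          have "real k * real k ^ m = real k ^ Suc m" by simp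
          also have "\<dots> \<le> real (k+1) ^ Suc m" by (rule power_mono) auto
          finally have "real k * real k ^ m \<le> real (k+1) ^ Suc m" .
          then show ?thesis using C1 ep by (intro mult_right_mono mult_left_mono) auto
        qed
        finally have b: "real k * (C1 * real (j+1)^m * e^j) \<le> (C1 / e) * real (k+1)^(Suc m) * e^k" .
        show ?thesis using add_mono[OF a b] by (simp add: C_def algebra_simps)
      qed
      finally show ?thesis .
    qed
    then show "\<exists>C\<ge>0. \<forall>k x. cmod (pderivs vs (\<lambda>x. g x ^ k * H x) x) \<le> C * real (k+1)^(Suc m) * e^k"
      using C0 by blast
  qed
qed


lemma unif0:
  fixes F :: "nat \<Rightarrow> real^'n \<Rightarrow> complex"
  assumes "\<And>k x. cmod (F k x) \<le> b k" "b \<longlonglongrightarrow> 0"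
  shows "uniform_limit UNIV F (\<lambda>x. 0) sequentially"
  unfolding uniform_limit_iff
proof (intro allI impI)
  fix r :: real assume r: "r > 0"
  have "\<forall>\<^sub>F k in sequentially. b k < r"
    using assms(2) r by (simp add: order_tendstoD(2))
  then show "\<forall>\<^sub>F k in sequentially. \<forall>x\<in>UNIV. dist (F k x) 0 < r"
  proof (rule eventually_mono)
    fix k assume "b k < r"
    then show "\<forall>x\<in>UNIV. dist (F k x) 0 < r"
    proof (intro ballI)
      fix x assume "b k < r"
      then show "dist (F k x) 0 < r" using assms(1)[of k x] by (simp add: dist_norm)
    qed
  qed
qed

lemma cscale_neg: "cscale (- c) (x::'x::complex_banach) = - cscale c x"
proof -
  have "cscale (- c) x + cscale c x = cscale (complex_of_real 0) x"
    by (simp add: cscale_add_left[symmetric])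
  also have "\<dots> = 0" by (simp only: cscale_of_real) simp
  finally show ?thesis by (simp add: eq_neg_iff_add_eq_0)
qed

lemma hyp:
  fixes A :: "(real^'n \<Rightarrow> complex) \<Rightarrow> 'x::complex_banach \<Rightarrow> 'x"
  assumes "hyperop A"
  shows hyp_bop: "test \<phi> \<Longrightarrow> bop (A \<phi>)"
    and hyp_add: "test \<phi> \<Longrightarrow> test \<psi> \<Longrightarrow> A (\<lambda>x. \<phi> x + \<psi> x) = (\<lambda>y. A \<phi> y + A \<psi> y)"
    and hyp_sc: "test \<phi> \<Longrightarrow> A (\<lambda>x. c * \<phi> x) = (\<lambda>y. cscale c (A \<phi> y))"
    and hyp_cont: "conv0_D \<phi>s \<Longrightarrow> (\<lambda>j. onorm (A (\<phi>s j))) \<longlonglongrightarrow> 0"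
    and hyp_mul: "test \<phi> \<Longrightarrow> test \<psi> \<Longrightarrow> A (\<lambda>x. \<phi> x * \<psi> x) = A \<phi> \<circ> A \<psi>"
    and hyp_sep: "(\<forall>\<phi>. test \<phi> \<longrightarrow> A \<phi> y = 0) \<Longrightarrow> y = 0"
  using assms unfolding hyperop_def by auto

lemma wd:
  fixes A :: "(real^'n \<Rightarrow> complex) \<Rightarrow> 'x::complex_banach \<Rightarrow> 'x"
    and f :: "real^'n \<Rightarrow> real"
  assumes hA: "hyperop A" and sf: "smooth f" and tp: "test \<phi>"
  shows "fcalc f A (A \<phi> y) = A (\<lambda>t. complex_of_real (f t) * \<phi> t) y"
proof -
  define F where "F = (\<lambda>t. complex_of_real (f t))"
  have sF: "smooth F" unfolding F_def using smooth_ofreal[OF sf] .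
  note hmul = hyp_mul[OF hA] and hb = hyp_bop[OF hA] and hsep = hyp_sep[OF hA]
  have key: "A ch (A (\<lambda>t. F t * \<psi> t) z) = A (\<lambda>t. F t * ch t) (A \<psi> z)" if "test ch" "test \<psi>" for ch \<psi> z
  proof -
    have t1: "test (\<lambda>t. F t * \<psi> t)" using test_mult[OF sF that(2)] .
    have t2: "test (\<lambda>t. F t * ch t)" using test_mult[OF sF that(1)] .
    have "A ch (A (\<lambda>t. F t * \<psi> t) z) = A (\<lambda>x. ch x * (F x * \<psi> x)) z"
      using hmul[OF that(1) t1] by simp
    also have "(\<lambda>x. ch x * (F x * \<psi> x)) = (\<lambda>x. (F x * ch x) * \<psi> x)" by (simp add: ac_simps)
    also have "A \<dots> z = A (\<lambda>t. F t * ch t) (A \<psi> z)" using hmul[OF t2 that(2)] by simp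
    finally show ?thesis .
  qed
  have "\<exists>z \<phi>' y'. test \<phi>' \<and> A \<phi> y = A \<phi>' y' \<and> z = A (\<lambda>t. complex_of_real (f t) * \<phi>' t) y'"
    using tp by (intro exI[of _ "A (\<lambda>t. complex_of_real (f t) * \<phi> t) y"] exI[of _ \<phi>] exI[of _ y]) simp
  then have "\<exists>\<phi>' y'. test \<phi>' \<and> A \<phi> y = A \<phi>' y' \<and> fcalc f A (A \<phi> y) = A (\<lambda>t. complex_of_real (f t) * \<phi>' t) y'"
    unfolding fcalc_def by (rule someI_ex)
  then obtain \<phi>' y' where p: "test \<phi>'" "A \<phi> y = A \<phi>' y'" "fcalc f A (A \<phi> y) = A (\<lambda>t. F t * \<phi>' t) y'"
    unfolding F_def by (elim exE conjE) simp
  define u where "u = A (\<lambda>t. F t * \<phi>' t) y'"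
  define w where "w = A (\<lambda>t. F t * \<phi> t) y"
  have "u - w = 0"
  proof (rule hsep, intro allI impI)
    fix ch :: "real^'n \<Rightarrow> complex" assume tc: "test ch"
    have lin: "linear (A ch)" using hb[OF tc] unfolding bop_def by (simp add: bounded_linear.linear)
    have "A ch u = A ch w" unfolding u_def w_def key[OF tc p(1)] key[OF tc tp] p(2) ..
    then show "A ch (u - w) = 0" using linear_diff[OF lin] by simp
  qed
  then show ?thesis using p(3) unfolding u_def w_def F_def by simp
qed


theorem lemma5p6:
  fixes A :: "(real^'n \<Rightarrow> complex) \<Rightarrow> 'x::complex_banach \<Rightarrow> 'x"
    and f :: "real^'n \<Rightarrow> real"
    and bbar :: "'x \<Rightarrow> 'x"
  assumes "hyperop A"
    and "smooth f"
    and "bop bbar"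
    and "\<forall>x \<in> DA A. bbar x = fcalc f A x"
  shows "(\<lambda>t. complex_of_real (f t)) ` hsupp A \<subseteq> opspectrum bbar"
proof
  note hA = assms(1) and sf = assms(2) and bb = assms(4)
  fix l assume "l \<in> (\<lambda>t. complex_of_real (f t)) ` hsupp A"
  then obtain t0 where t0: "t0 \<in> hsupp A" and l: "l = complex_of_real (f t0)" by blast
  show "l \<in> opspectrum bbar"
    unfolding opspectrum_def
  proof (rule CollectI, rule notI)
    assume "\<exists>S. bop S \<and> (\<forall>x. S (bbar x - cscale l x) = x) \<and> (\<forall>x. bbar (S x) - cscale l (S x) = x)"
    then obtain S where bS: "bop S" and Sinv: "\<And>x. S (bbar x - cscale l x) = x" by blast
    have "bounded_linear S" using bS unfolding bop_def by simp
    then obtain K where K0: "K > 0" and K: "\<And>x. norm (S x) \<le> norm x * K"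
      using bounded_linear.pos_bounded by blast
    define e where "e = 1 / (2 * K)"
    have e0: "e > 0" using K0 by (simp add: e_def)
    have Ke: "K * e = 1/2" using K0 by (simp add: e_def)
    define F where "F = (\<lambda>t. complex_of_real (f t))"
    have sF: "smooth F" unfolding F_def by (rule smooth_ofreal[OF sf])
    define g where "g = (\<lambda>t. F t + (- l))"
    have sg: "smooth g" unfolding g_def by (rule smooth_add[OF sF smooth_const])
    have gabs: "cmod (g t) = \<bar>f t - f t0\<bar>" for t
      unfolding g_def F_def l by (simp flip: of_real_diff)
    have cf: "continuous_on UNIV f"
    proof -
      have "continuous (at x) f" for x
        using smooth_diff[OF sf] by (rule differentiable_imp_continuous_within)
      then show ?thesis by (simp add: continuous_at_imp_continuous_on)
    qed
    define U where "U = {t. \<bar>f t - f t0\<bar> < e}"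
    have oU: "open U" unfolding U_def
      by (rule open_Collect_less) (intro continuous_intros cf)+
    have tU: "t0 \<in> U" using e0 by (simp add: U_def)
    obtain \<phi> where tp: "test \<phi>" and sU: "tsupp \<phi> \<subseteq> U" and nz: "A \<phi> \<noteq> (\<lambda>y. 0)"
      using t0 oU tU unfolding hsupp_def by blast
    have good: "goodH g e \<phi>"
      unfolding goodH_def
    proof (intro conjI ballI)
      show "smooth \<phi>" "compact (tsupp \<phi>)" using tp unfolding test_def by auto
      fix x assume "x \<in> tsupp \<phi>"
      then have "x \<in> U" using sU by blast
      then show "cmod (g x) \<le> e" unfolding gabs U_def by simp
    qed
    define \<psi> where "\<psi> = (\<lambda>k x. g x ^ k * \<phi> x)"
    have tpsi: "test (\<psi> k)" for k
      unfolding \<psi>_def by (rule test_mult[OF smooth_power[OF sg] tp])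
    have step: "A (\<psi> k) y = S (A (\<psi> (Suc k)) y)" for k y
    proof -
      define h where "h = \<psi> k"
      have th: "test h" unfolding h_def by (rule tpsi)
      have inDA: "A h y \<in> DA A" unfolding DA_def using th by blast
      have e1: "bbar (A h y) = A (\<lambda>t. F t * h t) y"
        using bb inDA wd[OF hA sf th, of y] unfolding F_def by simp
      have e2: "cscale l (A h y) = A (\<lambda>x. l * h x) y"
        using hyp_sc[OF hA th, of l] by simp
      have tg: "test (\<lambda>x. g x * h x)" by (rule test_mult[OF sg th])
      have tl: "test (\<lambda>x. l * h x)" by (rule test_mult[OF smooth_const th])
      have "(\<lambda>t. F t * h t) = (\<lambda>x. g x * h x + l * h x)"
        unfolding g_def by (simp add: algebra_simps)
      then have e3: "A (\<lambda>t. F t * h t) y = A (\<lambda>x. g x * h x) y + A (\<lambda>x. l * h x) y"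
        using hyp_add[OF hA tg tl] by simp
      have e4: "(\<lambda>x. g x * h x) = \<psi> (Suc k)"
        unfolding h_def \<psi>_def by (simp add: ac_simps)
      have "bbar (A h y) - cscale l (A h y) = A (\<psi> (Suc k)) y"
        using e1 e2 e3 e4 by simp
      then show ?thesis using Sinv[of "A h y"] unfolding h_def by simp
    qed
    have iter: "A \<phi> y = (S ^^ k) (A (\<psi> k) y)" for k y
    proof (induction k)
      case 0
      have "\<psi> 0 = \<phi>" unfolding \<psi>_def by simp
      then show ?case by simp
    next
      case (Suc k)
      then show ?case using step[of k y] by (simp add: funpow_Suc_right del: funpow.simps)
    qed
    have Sk: "norm ((S ^^ k) z) \<le> K ^ k * norm z" for k z
    proof (induction k)
      case 0 then show ?case by simp
    next
      case (Suc k)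
      have "norm ((S ^^ Suc k) z) = norm (S ((S ^^ k) z))" by simp
      also have "\<dots> \<le> norm ((S ^^ k) z) * K" by (rule K)
      also have "\<dots> \<le> K ^ k * norm z * K" using Suc K0 by (simp add: mult_right_mono)
      finally show ?case by (simp add: algebra_simps)
    qed
    define \<Phi> where "\<Phi> = (\<lambda>k x. complex_of_real K ^ k * \<psi> k x)"
    have tPhi: "test (\<Phi> k)" for k
      unfolding \<Phi>_def by (rule test_mult[OF smooth_const tpsi])
    have conv: "conv0_D \<Phi>"
      unfolding conv0_D_def
    proof (intro conjI allI ballI)
      show "test (\<Phi> j)" for j by (rule tPhi)
      have "tsupp (\<Phi> j) \<subseteq> tsupp \<phi>" for j
        unfolding \<Phi>_def \<psi>_def
        using order_trans[OF tsupp_mult[of "\<lambda>x. complex_of_real K ^ j" "\<lambda>x. g x ^ j * \<phi> x"] tsupp_mult[of "\<lambda>x. g x ^ j" \<phi>]] by simp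
      then show "\<exists>K. compact K \<and> (\<forall>j. tsupp (\<Phi> j) \<subseteq> K)"
        using tp unfolding test_def by blast
      fix vs :: "(real^'n) list" assume vs: "vs \<in> lists Basis"
      obtain C where C0: "C \<ge> 0" and C: "\<And>k x. cmod (pderivs vs (\<lambda>x. g x ^ k * \<phi> x) x) \<le> C * real (k+1)^(length vs) * e^k"
        using est[OF sg e0, of "length vs"] good vs by blast
      show "uniform_limit UNIV (\<lambda>j. pderivs vs (\<Phi> j)) (\<lambda>x. 0) sequentially"
      proof (rule unif0)
        fix k x
        have sp: "smooth (\<psi> k)" using tpsi[of k] unfolding test_def by simp
        have "pderivs vs (\<Phi> k) x = complex_of_real K ^ k * pderivs vs (\<psi> k) x"
          unfolding \<Phi>_def using pderivs_cmult[OF sp vs] by simp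
        then have "cmod (pderivs vs (\<Phi> k) x) = K ^ k * cmod (pderivs vs (\<psi> k) x)"
          using K0 by (simp add: norm_mult norm_power)
        also have "\<dots> \<le> K ^ k * (C * real (k+1)^(length vs) * e^k)"
          using C[of k x] K0 unfolding \<psi>_def by (intro mult_left_mono) auto
        also have "\<dots> = C * (real (k+1)^(length vs) * (1/2)^k)"
          by (simp add: Ke[symmetric] power_mult_distrib)
        finally show "cmod (pderivs vs (\<Phi> k) x) \<le> C * (real (k+1)^(length vs) * (1/2)^k)" .
      next
        show "(\<lambda>k. C * (real (k+1)^(length vs) * (1/2)^k)) \<longlonglongrightarrow> 0"
          using tendsto_mult_right_zero[OF poly_geo[of "1/2" "length vs"]] by simp
      qed
    qed
    have lim: "(\<lambda>k. onorm (A (\<Phi> k))) \<longlonglongrightarrow> 0" by (rule hyp_cont[OF hA conv])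
    have "A \<phi> y = 0" for y
    proof -
      have bnd: "norm (A \<phi> y) \<le> onorm (A (\<Phi> k)) * norm y" for k
      proof -
        have "norm (A \<phi> y) \<le> K ^ k * norm (A (\<psi> k) y)" using iter[of y k] Sk by metis
        also have "\<dots> = norm (A (\<Phi> k) y)"
        proof -
          have "A (\<Phi> k) = (\<lambda>y. cscale (complex_of_real K ^ k) (A (\<psi> k) y))"
            unfolding \<Phi>_def by (rule hyp_sc[OF hA tpsi])
          then show ?thesis using K0 by (simp add: norm_cscale norm_power)
        qed
        also have "\<dots> \<le> onorm (A (\<Phi> k)) * norm y"
          using hyp_bop[OF hA tPhi] unfolding bop_def by (simp add: onorm)
        finally show ?thesis .
      qed
      have "(\<lambda>k. onorm (A (\<Phi> k)) * norm y) \<longlonglongrightarrow> 0 * norm y"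
        by (rule tendsto_mult[OF lim tendsto_const])
      then have "norm (A \<phi> y) \<le> 0"
        using bnd by (intro LIMSEQ_le_const[where X="\<lambda>k. onorm (A (\<Phi> k)) * norm y"]) auto
      then show ?thesis by simp
    qed
    then show False using nz by auto
  qed
qed

end
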